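(* Let $x_0<x_1<\cdots<x_6$ be real numbers and write $d_{i,j}=x_j-x_i$ for $i<j$. Let $y_0,\ldots,y_6$ be real numbers such that, for some $\epsilon>0$, (1) $-d_{1,2}y_0+d_{0,2}y_1-d_{0,1}y_2\ge\epsilon$, (2) $d_{3,4}y_0-d_{0,4}y_3+d_{0,3}y_4\ge\epsilon$, (3) $-d_{3,5}y_1+d_{1,5}y_3-d_{1,3}y_5\ge\epsilon$, (4) $d_{3,6}y_2-d_{2,6}y_3+d_{2,3}y_6\ge\epsilon$, (5) $d_{5,6}y_3-d_{3,6}y_5+d_{3,5}y_6\ge\epsilon$, (6) $-d_{5,6}y_4+d_{4,6}y_5-d_{4,5}y_6\ge\epsilon$. (Equivalently, with $p_i=(x_i,y_i)$: $p_1$ is strictly above $\overline{p_0p_2}$, $p_3$ is strictly below $\overline{p_0p_4}$, $p_3$ is strictly above $\overline{p_1p_5}$, $p_3$ is strictly below $\overline{p_2p_6}$, $p_5$ is strictly below $\overline{p_3p_6}$, and $p_5$ is strictly above $\overline{p_4p_6}$.) Then the visibility graph of the terrain with points $p_i=(x_i,y_i)$, $i=0,\ldots,6$, is $G'$.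
   Context: A terrain is an $x$-monotone polygonal chain with points $p_0,\ldots,p_{n-1}$ listed left to right (strictly increasing $x$-coordinates), consecutive points joined by segments. Points $p_i,p_j$ ($i<j$) see each other iff the open segment $\overline{p_ip_j}$ lies strictly above the terrain, i.e. iff $j=i+1$ or every $p_k$ with $i<k<j$ lies strictly below $\overline{p_ip_j}$. The visibility graph has vertex $v_i$ for $p_i$ and edge $\{v_i,v_j\}$ iff $p_i,p_j$ see each other. $G'$ is the graph on $v_0,\ldots,v_6$ with edge set $\{v_0v_1,v_0v_3,v_0v_4,v_0v_5,v_0v_6,v_1v_2,v_1v_3,v_1v_6,v_2v_3,v_2v_6,v_3v_4,v_3v_5,v_3v_6,v_4v_5,v_5v_6\}$. *)

theory Defs
  imports Complex_Main
begin

text \<open>A terrain is given by coordinate functions x, y : nat \<Rightarrow> real; point p_i = (x i, y i).\<close>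

definition is_terrain :: "(nat \<Rightarrow> real) \<Rightarrow> nat \<Rightarrow> bool" where
  "is_terrain x n \<longleftrightarrow> (\<forall>i. Suc i < n \<longrightarrow> x i < x (Suc i))"

definition strictly_below :: "(nat \<Rightarrow> real) \<Rightarrow> (nat \<Rightarrow> real) \<Rightarrow> nat \<Rightarrow> nat \<Rightarrow> nat \<Rightarrow> bool" where
  "strictly_below x y i j k \<longleftrightarrow>
     y k < y i + (y j - y i) * (x k - x i) / (x j - x i)"

definition sees :: "(nat \<Rightarrow> real) \<Rightarrow> (nat \<Rightarrow> real) \<Rightarrow> nat \<Rightarrow> nat \<Rightarrow> bool" where
  "sees x y i j \<longleftrightarrow> j = Suc i \<or> (\<forall>k. i < k \<and> k < j \<longrightarrow> strictly_below x y i j k)"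

definition vis_edges :: "(nat \<Rightarrow> real) \<Rightarrow> (nat \<Rightarrow> real) \<Rightarrow> nat \<Rightarrow> nat set set" where
  "vis_edges x y n = {{i, j} | i j. i < j \<and> j < n \<and> sees x y i j}"

definition G'_edges :: "nat set set" where
  "G'_edges = {{0,1},{0,3},{0,4},{0,5},{0,6},{1,2},{1,3},{1,6},{2,3},{2,6},
               {3,4},{3,5},{3,6},{4,5},{5,6}}"

end

theory Submission
  imports Defs
begin

definition Dt :: "(nat \<Rightarrow> real) \<Rightarrow> (nat \<Rightarrow> real) \<Rightarrow> nat \<Rightarrow> nat \<Rightarrow> nat \<Rightarrow> real" where
  "Dt x y a b c = (x c - x b) * y a - (x c - x a) * y b + (x b - x a) * y c"

abbreviation "C3 L A B \<equiv> (\<exists>p q r::real. p > 0 \<and> q > 0 \<and> r > 0 \<and> p * L = q * A + r * B)"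

lemma E1: "x a < x b \<Longrightarrow> x b < x c \<Longrightarrow> x c < x d \<Longrightarrow> C3 (Dt x y a b d) (Dt x y a c d) (Dt x y a b c)"
  by (rule exI[of _ "x c - x a"], rule exI[of _ "x b - x a"], rule exI[of _ "x d - x a"]) (simp add: Dt_def algebra_simps)
lemma E2: "x a < x b \<Longrightarrow> x b < x c \<Longrightarrow> x c < x d \<Longrightarrow> C3 (Dt x y a b d) (Dt x y b c d) (Dt x y a b c)"
  by (rule exI[of _ "x c - x b"], rule exI[of _ "x b - x a"], rule exI[of _ "x d - x b"]) (simp add: Dt_def algebra_simps)
lemma E3: "x a < x b \<Longrightarrow> x b < x c \<Longrightarrow> x c < x d \<Longrightarrow> C3 (Dt x y a c d) (Dt x y b c d) (Dt x y a b c)"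
  by (rule exI[of _ "x c - x b"], rule exI[of _ "x c - x a"], rule exI[of _ "x d - x c"]) (simp add: Dt_def algebra_simps)
lemma E4: "x a < x b \<Longrightarrow> x b < x c \<Longrightarrow> x c < x d \<Longrightarrow> C3 (Dt x y a c d) (Dt x y b c d) (Dt x y a b d)"
  by (rule exI[of _ "x d - x b"], rule exI[of _ "x d - x a"], rule exI[of _ "x d - x c"]) (simp add: Dt_def algebra_simps)

lemma sLp: "C3 L A B \<Longrightarrow> 0 < A \<Longrightarrow> 0 < B \<Longrightarrow> 0 < L"
proof -
  assume c: "C3 L A B" and s: "0 < A" "0 < B"
  then obtain p q r :: real where pqr: "p > 0" "q > 0" "r > 0" "p * L = q * A + r * B" by blast
  have sg: "0 < p * L \<longleftrightarrow> 0 < L" "p * L < 0 \<longleftrightarrow> L < 0" "0 < q * A \<longleftrightarrow> 0 < A" "q * A < 0 \<longleftrightarrow> A < 0" "0 < r * B \<longleftrightarrow> 0 < B" "r * B < 0 \<longleftrightarrow> B < 0"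
    using pqr(1-3) by (simp_all add: zero_less_mult_iff mult_less_0_iff)
  show "0 < L" using sg s pqr(4) by linarith
qed
lemma sLn: "C3 L A B \<Longrightarrow> A < 0 \<Longrightarrow> B < 0 \<Longrightarrow> L < 0"
proof -
  assume c: "C3 L A B" and s: "A < 0" "B < 0"
  then obtain p q r :: real where pqr: "p > 0" "q > 0" "r > 0" "p * L = q * A + r * B" by blast
  have sg: "0 < p * L \<longleftrightarrow> 0 < L" "p * L < 0 \<longleftrightarrow> L < 0" "0 < q * A \<longleftrightarrow> 0 < A" "q * A < 0 \<longleftrightarrow> A < 0" "0 < r * B \<longleftrightarrow> 0 < B" "r * B < 0 \<longleftrightarrow> B < 0"
    using pqr(1-3) by (simp_all add: zero_less_mult_iff mult_less_0_iff)
  show "L < 0" using sg s pqr(4) by linarith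
qed
lemma sBp: "C3 L A B \<Longrightarrow> 0 < L \<Longrightarrow> A < 0 \<Longrightarrow> 0 < B"
proof -
  assume c: "C3 L A B" and s: "0 < L" "A < 0"
  then obtain p q r :: real where pqr: "p > 0" "q > 0" "r > 0" "p * L = q * A + r * B" by blast
  have sg: "0 < p * L \<longleftrightarrow> 0 < L" "p * L < 0 \<longleftrightarrow> L < 0" "0 < q * A \<longleftrightarrow> 0 < A" "q * A < 0 \<longleftrightarrow> A < 0" "0 < r * B \<longleftrightarrow> 0 < B" "r * B < 0 \<longleftrightarrow> B < 0"
    using pqr(1-3) by (simp_all add: zero_less_mult_iff mult_less_0_iff)
  show "0 < B" using sg s pqr(4) by linarith
qed
lemma sBn: "C3 L A B \<Longrightarrow> L < 0 \<Longrightarrow> 0 < A \<Longrightarrow> B < 0"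
proof -
  assume c: "C3 L A B" and s: "L < 0" "0 < A"
  then obtain p q r :: real where pqr: "p > 0" "q > 0" "r > 0" "p * L = q * A + r * B" by blast
  have sg: "0 < p * L \<longleftrightarrow> 0 < L" "p * L < 0 \<longleftrightarrow> L < 0" "0 < q * A \<longleftrightarrow> 0 < A" "q * A < 0 \<longleftrightarrow> A < 0" "0 < r * B \<longleftrightarrow> 0 < B" "r * B < 0 \<longleftrightarrow> B < 0"
    using pqr(1-3) by (simp_all add: zero_less_mult_iff mult_less_0_iff)
  show "B < 0" using sg s pqr(4) by linarith
qed
lemma sAp: "C3 L A B \<Longrightarrow> 0 < L \<Longrightarrow> B < 0 \<Longrightarrow> 0 < A"
proof -
  assume c: "C3 L A B" and s: "0 < L" "B < 0"
  then obtain p q r :: real where pqr: "p > 0" "q > 0" "r > 0" "p * L = q * A + r * B" by blast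
  have sg: "0 < p * L \<longleftrightarrow> 0 < L" "p * L < 0 \<longleftrightarrow> L < 0" "0 < q * A \<longleftrightarrow> 0 < A" "q * A < 0 \<longleftrightarrow> A < 0" "0 < r * B \<longleftrightarrow> 0 < B" "r * B < 0 \<longleftrightarrow> B < 0"
    using pqr(1-3) by (simp_all add: zero_less_mult_iff mult_less_0_iff)
  show "0 < A" using sg s pqr(4) by linarith
qed
lemma sAn: "C3 L A B \<Longrightarrow> L < 0 \<Longrightarrow> 0 < B \<Longrightarrow> A < 0"
proof -
  assume c: "C3 L A B" and s: "L < 0" "0 < B"
  then obtain p q r :: real where pqr: "p > 0" "q > 0" "r > 0" "p * L = q * A + r * B" by blast
  have sg: "0 < p * L \<longleftrightarrow> 0 < L" "p * L < 0 \<longleftrightarrow> L < 0" "0 < q * A \<longleftrightarrow> 0 < A" "q * A < 0 \<longleftrightarrow> A < 0" "0 < r * B \<longleftrightarrow> 0 < B" "r * B < 0 \<longleftrightarrow> B < 0"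
    using pqr(1-3) by (simp_all add: zero_less_mult_iff mult_less_0_iff)
  show "A < 0" using sg s pqr(4) by linarith
qed

lemma sb_iff: "x i < x k \<Longrightarrow> x k < x j \<Longrightarrow> strictly_below x y i j k \<longleftrightarrow> 0 < Dt x y i k j"
proof -
  assume a: "x i < x k" "x k < x j"
  then have p: "x j - x i > 0" by simp
  have "strictly_below x y i j k \<longleftrightarrow> (y k - y i) * (x j - x i) < (y j - y i) * (x k - x i)"
    unfolding strictly_below_def using p by (simp add: field_simps)
  also have "\<dots> \<longleftrightarrow> 0 < Dt x y i k j" by (simp add: Dt_def algebra_simps)
  finally show ?thesis .
qed

theorem lemma1:
  fixes x y :: "nat \<Rightarrow> real" and \<epsilon> :: real
  assumes terrain: "is_terrain x 7"
    and eps: "\<epsilon> > 0"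
    and h1: "- (x 2 - x 1) * y 0 + (x 2 - x 0) * y 1 - (x 1 - x 0) * y 2 \<ge> \<epsilon>"
    and h2: "(x 4 - x 3) * y 0 - (x 4 - x 0) * y 3 + (x 3 - x 0) * y 4 \<ge> \<epsilon>"
    and h3: "- (x 5 - x 3) * y 1 + (x 5 - x 1) * y 3 - (x 3 - x 1) * y 5 \<ge> \<epsilon>"
    and h4: "(x 6 - x 3) * y 2 - (x 6 - x 2) * y 3 + (x 3 - x 2) * y 6 \<ge> \<epsilon>"
    and h5: "(x 6 - x 5) * y 3 - (x 6 - x 3) * y 5 + (x 5 - x 3) * y 6 \<ge> \<epsilon>"
    and h6: "- (x 6 - x 5) * y 4 + (x 6 - x 4) * y 5 - (x 5 - x 4) * y 6 \<ge> \<epsilon>"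
  shows "vis_edges x y 7 = G'_edges"
proof -
  have t: "\<And>i. Suc i < 7 \<Longrightarrow> x i < x (Suc i)" using terrain unfolding is_terrain_def by blast
  have t0: "x 0 < x 1" using t[of 0] by simp
  have t1: "x 1 < x 2" using t[of 1] by (simp add: numeral_eq_Suc)
  have t2: "x 2 < x 3" using t[of 2] by (simp add: numeral_eq_Suc)
  have t3: "x 3 < x 4" using t[of 3] by (simp add: numeral_eq_Suc)
  have t4: "x 4 < x 5" using t[of 4] by (simp add: numeral_eq_Suc)
  have t5: "x 5 < x 6" using t[of 5] by (simp add: numeral_eq_Suc)
  have o01: "x 0 < x 1" using t0 t1 t2 t3 t4 t5 by linarith
  have o02: "x 0 < x 2" using t0 t1 t2 t3 t4 t5 by linarith
  have o03: "x 0 < x 3" using t0 t1 t2 t3 t4 t5 by linarith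
  have o04: "x 0 < x 4" using t0 t1 t2 t3 t4 t5 by linarith
  have o05: "x 0 < x 5" using t0 t1 t2 t3 t4 t5 by linarith
  have o06: "x 0 < x 6" using t0 t1 t2 t3 t4 t5 by linarith
  have o12: "x 1 < x 2" using t0 t1 t2 t3 t4 t5 by linarith
  have o13: "x 1 < x 3" using t0 t1 t2 t3 t4 t5 by linarith
  have o14: "x 1 < x 4" using t0 t1 t2 t3 t4 t5 by linarith
  have o15: "x 1 < x 5" using t0 t1 t2 t3 t4 t5 by linarith
  have o16: "x 1 < x 6" using t0 t1 t2 t3 t4 t5 by linarith
  have o23: "x 2 < x 3" using t0 t1 t2 t3 t4 t5 by linarith
  have o24: "x 2 < x 4" using t0 t1 t2 t3 t4 t5 by linarith
  have o25: "x 2 < x 5" using t0 t1 t2 t3 t4 t5 by linarith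
  have o26: "x 2 < x 6" using t0 t1 t2 t3 t4 t5 by linarith
  have o34: "x 3 < x 4" using t0 t1 t2 t3 t4 t5 by linarith
  have o35: "x 3 < x 5" using t0 t1 t2 t3 t4 t5 by linarith
  have o36: "x 3 < x 6" using t0 t1 t2 t3 t4 t5 by linarith
  have o45: "x 4 < x 5" using t0 t1 t2 t3 t4 t5 by linarith
  have o46: "x 4 < x 6" using t0 t1 t2 t3 t4 t5 by linarith
  have o56: "x 5 < x 6" using t0 t1 t2 t3 t4 t5 by linarith
  have d012: "Dt x y 0 1 2 < 0" using h1 eps by (simp add: Dt_def algebra_simps)
  have d034: "0 < Dt x y 0 3 4" using h2 eps by (simp add: Dt_def algebra_simps)
  have d135: "Dt x y 1 3 5 < 0" using h3 eps by (simp add: Dt_def algebra_simps)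
  have d236: "0 < Dt x y 2 3 6" using h4 eps by (simp add: Dt_def algebra_simps)
  have d356: "0 < Dt x y 3 5 6" using h5 eps by (simp add: Dt_def algebra_simps)
  have d456: "Dt x y 4 5 6 < 0" using h6 eps by (simp add: Dt_def algebra_simps)
  have d256: "0 < Dt x y 2 5 6" by (rule sLp[OF E4[OF o23 o35 o56] d356 d236])
  have d245: "0 < Dt x y 2 4 5" by (rule sBp[OF E3[OF o24 o45 o56] d256 d456])
  have d246: "0 < Dt x y 2 4 6" by (rule sBp[OF E4[OF o24 o45 o56] d256 d456])
  have d345: "0 < Dt x y 3 4 5" by (rule sBp[OF E3[OF o34 o45 o56] d356 d456])
  have d346: "0 < Dt x y 3 4 6" by (rule sBp[OF E4[OF o34 o45 o56] d356 d456])
  have d035: "0 < Dt x y 0 3 5" by (rule sLp[OF E2[OF o03 o34 o45] d345 d034])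
  have d045: "0 < Dt x y 0 4 5" by (rule sLp[OF E3[OF o03 o34 o45] d345 d034])
  have d036: "0 < Dt x y 0 3 6" by (rule sLp[OF E2[OF o03 o34 o46] d346 d034])
  have d046: "0 < Dt x y 0 4 6" by (rule sLp[OF E3[OF o03 o34 o46] d346 d034])
  have d056: "0 < Dt x y 0 5 6" by (rule sLp[OF E3[OF o03 o35 o56] d356 d035])
  have d134: "Dt x y 1 3 4 < 0" by (rule sBn[OF E2[OF o13 o34 o45] d135 d345])
  have d013: "0 < Dt x y 0 1 3" by (rule sBp[OF E3[OF o01 o13 o34] d034 d134])
  have d014: "0 < Dt x y 0 1 4" by (rule sBp[OF E4[OF o01 o13 o34] d034 d134])
  have d015: "0 < Dt x y 0 1 5" by (rule sLp[OF E1[OF o01 o13 o35] d035 d013])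
  have d016: "0 < Dt x y 0 1 6" by (rule sLp[OF E1[OF o01 o13 o36] d036 d013])
  have d023: "0 < Dt x y 0 2 3" by (rule sAp[OF E1[OF o01 o12 o23] d013 d012])
  have d123: "0 < Dt x y 1 2 3" by (rule sAp[OF E2[OF o01 o12 o23] d013 d012])
  have d024: "0 < Dt x y 0 2 4" by (rule sAp[OF E1[OF o01 o12 o24] d014 d012])
  have d124: "0 < Dt x y 1 2 4" by (rule sAp[OF E2[OF o01 o12 o24] d014 d012])
  have d025: "0 < Dt x y 0 2 5" by (rule sAp[OF E1[OF o01 o12 o25] d015 d012])
  have d125: "0 < Dt x y 1 2 5" by (rule sAp[OF E2[OF o01 o12 o25] d015 d012])
  have d026: "0 < Dt x y 0 2 6" by (rule sAp[OF E1[OF o01 o12 o26] d016 d012])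
  have d126: "0 < Dt x y 1 2 6" by (rule sAp[OF E2[OF o01 o12 o26] d016 d012])
  have d234: "Dt x y 2 3 4 < 0" by (rule sAn[OF E3[OF o12 o23 o34] d134 d123])
  have d235: "Dt x y 2 3 5 < 0" by (rule sAn[OF E3[OF o12 o23 o35] d135 d123])
  have d136: "0 < Dt x y 1 3 6" by (rule sLp[OF E3[OF o12 o23 o36] d236 d123])
  have d145: "0 < Dt x y 1 4 5" by (rule sLp[OF E3[OF o12 o24 o45] d245 d124])
  have d146: "0 < Dt x y 1 4 6" by (rule sLp[OF E3[OF o12 o24 o46] d246 d124])
  have d156: "0 < Dt x y 1 5 6" by (rule sLp[OF E3[OF o12 o25 o56] d256 d125])
  have s01: "sees x y 0 1" by (simp add: sees_def)
  have s02: "\<not> sees x y 0 2"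
  proof
    assume "sees x y 0 2"
    then have "strictly_below x y 0 2 1" unfolding sees_def by (auto dest: spec[of _ "1::nat"])
    then show False using d012 sb_iff[OF o01 o12] by simp
  qed
  have s03: "sees x y 0 3" unfolding sees_def
  proof (intro disjI2 allI impI)
    fix k :: nat assume "0 < k \<and> k < 3"
    then have "k = 1 \<or> k = 2" by auto
    then show "strictly_below x y 0 3 k" using d013 sb_iff[OF o01 o13] d023 sb_iff[OF o02 o23] by auto
  qed
  have s04: "sees x y 0 4" unfolding sees_def
  proof (intro disjI2 allI impI)
    fix k :: nat assume "0 < k \<and> k < 4"
    then have "k = 1 \<or> k = 2 \<or> k = 3" by auto
    then show "strictly_below x y 0 4 k" using d014 sb_iff[OF o01 o14] d024 sb_iff[OF o02 o24] d034 sb_iff[OF o03 o34] by auto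
  qed
  have s05: "sees x y 0 5" unfolding sees_def
  proof (intro disjI2 allI impI)
    fix k :: nat assume "0 < k \<and> k < 5"
    then have "k = 1 \<or> k = 2 \<or> k = 3 \<or> k = 4" by auto
    then show "strictly_below x y 0 5 k" using d015 sb_iff[OF o01 o15] d025 sb_iff[OF o02 o25] d035 sb_iff[OF o03 o35] d045 sb_iff[OF o04 o45] by auto
  qed
  have s06: "sees x y 0 6" unfolding sees_def
  proof (intro disjI2 allI impI)
    fix k :: nat assume "0 < k \<and> k < 6"
    then have "k = 1 \<or> k = 2 \<or> k = 3 \<or> k = 4 \<or> k = 5" by auto
    then show "strictly_below x y 0 6 k" using d016 sb_iff[OF o01 o16] d026 sb_iff[OF o02 o26] d036 sb_iff[OF o03 o36] d046 sb_iff[OF o04 o46] d056 sb_iff[OF o05 o56] by auto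
  qed
  have s12: "sees x y 1 2" by (simp add: sees_def)
  have s13: "sees x y 1 3" unfolding sees_def
  proof (intro disjI2 allI impI)
    fix k :: nat assume "1 < k \<and> k < 3"
    then have "k = 2" by auto
    then show "strictly_below x y 1 3 k" using d123 sb_iff[OF o12 o23] by auto
  qed
  have s14: "\<not> sees x y 1 4"
  proof
    assume "sees x y 1 4"
    then have "strictly_below x y 1 4 3" unfolding sees_def by (auto dest: spec[of _ "3::nat"])
    then show False using d134 sb_iff[OF o13 o34] by simp
  qed
  have s15: "\<not> sees x y 1 5"
  proof
    assume "sees x y 1 5"
    then have "strictly_below x y 1 5 3" unfolding sees_def by (auto dest: spec[of _ "3::nat"])
    then show False using d135 sb_iff[OF o13 o35] by simp
  qed
  have s16: "sees x y 1 6" unfolding sees_def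
  proof (intro disjI2 allI impI)
    fix k :: nat assume "1 < k \<and> k < 6"
    then have "k = 2 \<or> k = 3 \<or> k = 4 \<or> k = 5" by auto
    then show "strictly_below x y 1 6 k" using d126 sb_iff[OF o12 o26] d136 sb_iff[OF o13 o36] d146 sb_iff[OF o14 o46] d156 sb_iff[OF o15 o56] by auto
  qed
  have s23: "sees x y 2 3" by (simp add: sees_def)
  have s24: "\<not> sees x y 2 4"
  proof
    assume "sees x y 2 4"
    then have "strictly_below x y 2 4 3" unfolding sees_def by (auto dest: spec[of _ "3::nat"])
    then show False using d234 sb_iff[OF o23 o34] by simp
  qed
  have s25: "\<not> sees x y 2 5"
  proof
    assume "sees x y 2 5"
    then have "strictly_below x y 2 5 3" unfolding sees_def by (auto dest: spec[of _ "3::nat"])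
    then show False using d235 sb_iff[OF o23 o35] by simp
  qed
  have s26: "sees x y 2 6" unfolding sees_def
  proof (intro disjI2 allI impI)
    fix k :: nat assume "2 < k \<and> k < 6"
    then have "k = 3 \<or> k = 4 \<or> k = 5" by auto
    then show "strictly_below x y 2 6 k" using d236 sb_iff[OF o23 o36] d246 sb_iff[OF o24 o46] d256 sb_iff[OF o25 o56] by auto
  qed
  have s34: "sees x y 3 4" by (simp add: sees_def)
  have s35: "sees x y 3 5" unfolding sees_def
  proof (intro disjI2 allI impI)
    fix k :: nat assume "3 < k \<and> k < 5"
    then have "k = 4" by auto
    then show "strictly_below x y 3 5 k" using d345 sb_iff[OF o34 o45] by auto
  qed
  have s36: "sees x y 3 6" unfolding sees_def
  proof (intro disjI2 allI impI)
    fix k :: nat assume "3 < k \<and> k < 6"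
    then have "k = 4 \<or> k = 5" by auto
    then show "strictly_below x y 3 6 k" using d346 sb_iff[OF o34 o46] d356 sb_iff[OF o35 o56] by auto
  qed
  have s45: "sees x y 4 5" by (simp add: sees_def)
  have s46: "\<not> sees x y 4 6"
  proof
    assume "sees x y 4 6"
    then have "strictly_below x y 4 6 5" unfolding sees_def by (auto dest: spec[of _ "5::nat"])
    then show False using d456 sb_iff[OF o45 o56] by simp
  qed
  have s56: "sees x y 5 6" by (simp add: sees_def)

  show ?thesis
  proof
    show "vis_edges x y 7 \<subseteq> G'_edges"
    proof
      fix e assume "e \<in> vis_edges x y 7"
      then obtain i j where e: "e = {i,j}" "i < j" "j < 7" "sees x y i j" unfolding vis_edges_def by blast
      have "j = 0 \<or> j = 1 \<or> j = 2 \<or> j = 3 \<or> j = 4 \<or> j = 5 \<or> j = 6" using e(3) by linarith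
      moreover have "i = 0 \<or> i = 1 \<or> i = 2 \<or> i = 3 \<or> i = 4 \<or> i = 5" using e(2,3) by linarith
      ultimately show "e \<in> G'_edges" using e(2,4) unfolding e(1) G'_edges_def
        by (elim disjE) (simp_all add: s01 s02 s03 s04 s05 s06 s12 s13 s14 s15 s16 s23 s24 s25 s26 s34 s35 s36 s45 s46 s56 s12[simplified] s13[simplified] s14[simplified] s15[simplified] s16[simplified])
    qed
  next
    show "G'_edges \<subseteq> vis_edges x y 7"
    proof -
    have "{0,1} \<in> vis_edges x y 7" unfolding vis_edges_def by (rule CollectI, rule exI[of _ "0::nat"], rule exI[of _ "1::nat"]) (simp add: s01 s01[simplified])
    moreover have "{0,3} \<in> vis_edges x y 7" unfolding vis_edges_def by (rule CollectI, rule exI[of _ "0::nat"], rule exI[of _ "3::nat"]) (simp add: s03 s03[simplified])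
    moreover have "{0,4} \<in> vis_edges x y 7" unfolding vis_edges_def by (rule CollectI, rule exI[of _ "0::nat"], rule exI[of _ "4::nat"]) (simp add: s04 s04[simplified])
    moreover have "{0,5} \<in> vis_edges x y 7" unfolding vis_edges_def by (rule CollectI, rule exI[of _ "0::nat"], rule exI[of _ "5::nat"]) (simp add: s05 s05[simplified])
    moreover have "{0,6} \<in> vis_edges x y 7" unfolding vis_edges_def by (rule CollectI, rule exI[of _ "0::nat"], rule exI[of _ "6::nat"]) (simp add: s06 s06[simplified])
    moreover have "{1,2} \<in> vis_edges x y 7" unfolding vis_edges_def by (rule CollectI, rule exI[of _ "1::nat"], rule exI[of _ "2::nat"]) (simp add: s12 s12[simplified])
    moreover have "{1,3} \<in> vis_edges x y 7" unfolding vis_edges_def by (rule CollectI, rule exI[of _ "1::nat"], rule exI[of _ "3::nat"]) (simp add: s13 s13[simplified])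
    moreover have "{1,6} \<in> vis_edges x y 7" unfolding vis_edges_def by (rule CollectI, rule exI[of _ "1::nat"], rule exI[of _ "6::nat"]) (simp add: s16 s16[simplified])
    moreover have "{2,3} \<in> vis_edges x y 7" unfolding vis_edges_def by (rule CollectI, rule exI[of _ "2::nat"], rule exI[of _ "3::nat"]) (simp add: s23 s23[simplified])
    moreover have "{2,6} \<in> vis_edges x y 7" unfolding vis_edges_def by (rule CollectI, rule exI[of _ "2::nat"], rule exI[of _ "6::nat"]) (simp add: s26 s26[simplified])
    moreover have "{3,4} \<in> vis_edges x y 7" unfolding vis_edges_def by (rule CollectI, rule exI[of _ "3::nat"], rule exI[of _ "4::nat"]) (simp add: s34 s34[simplified])
    moreover have "{3,5} \<in> vis_edges x y 7" unfolding vis_edges_def by (rule CollectI, rule exI[of _ "3::nat"], rule exI[of _ "5::nat"]) (simp add: s35 s35[simplified])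
    moreover have "{3,6} \<in> vis_edges x y 7" unfolding vis_edges_def by (rule CollectI, rule exI[of _ "3::nat"], rule exI[of _ "6::nat"]) (simp add: s36 s36[simplified])
    moreover have "{4,5} \<in> vis_edges x y 7" unfolding vis_edges_def by (rule CollectI, rule exI[of _ "4::nat"], rule exI[of _ "5::nat"]) (simp add: s45 s45[simplified])
    moreover have "{5,6} \<in> vis_edges x y 7" unfolding vis_edges_def by (rule CollectI, rule exI[of _ "5::nat"], rule exI[of _ "6::nat"]) (simp add: s56 s56[simplified])
      ultimately show ?thesis unfolding G'_edges_def by simp
    qed
  qed
qed

end
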